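(* There is a function $\delta(n)$ with $n^{c}\delta(n)\to 0$ for every constant $c>0$ such that for every histogram $h$ of a distribution and every $n$, a set of $n$ independent samples drawn from that distribution is faithful (in the sense defined below) with probability at least $1-\delta(n)$.
   Context: $\log$ is the natural logarithm; $poi(\lambda,j)=e^{-\lambda}\lambda^j/j!$. The histogram $h$ of a distribution gives, for each $x\in(0,1]$, the number $h(x)$ of domain elements of probability $x$. Buckets: for an integer $k\ge 0$, the $k$th bucket of $h$ consists of the histogram entries with probabilities in $\big(\frac{k}{n\log^2 n},\frac{k+1}{n\log^2 n}\big]$; writing $h_k$ for $h$ restricted to its $k$th bucket, let $B_{poi}(j,k)=\sum_{x:h_k(x)\neq0}h(x)\,poi(nx,j)$, and for a sample set $S$ let $B_S(j,k)$ be the number of domain elements in bucket $k$ seen exactly $j$ times in $S$. A set $S$ of $n$ samples is faithful (for $h$ and $n$) if: (1) every domain element of probability $x$ appears in $S$ a number of times $j$ satisfying $|nx-j|<\max\{\log^{1.5}n,\sqrt{nx\log^{1.5}n}\}$; and (2) for every integer $j<\log^2 n$ and every $k$, $|B_{poi}(j,k)-B_S(j,k)|<n^{0.6}$. *)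

theory Defs
  imports "HOL-Probability.Probability"
begin

definition poi :: "real \<Rightarrow> nat \<Rightarrow> real" where
  "poi lam j = exp (- lam) * lam ^ j / fact j"

definition histogram :: "'a pmf \<Rightarrow> real \<Rightarrow> nat" where
  "histogram p x = card {a. pmf p a = x}"

definition in_bucket :: "nat \<Rightarrow> nat \<Rightarrow> real \<Rightarrow> bool" where
  "in_bucket n k x \<longleftrightarrow>
     real k / (real n * (ln (real n))^2) < x \<and> x \<le> real (k+1) / (real n * (ln (real n))^2)"

definition B_poi :: "'a pmf \<Rightarrow> nat \<Rightarrow> nat \<Rightarrow> nat \<Rightarrow> real" where
  "B_poi p n j k = (\<Sum>x\<in>{x. 0 < x \<and> x \<le> 1 \<and> in_bucket n k x \<and> histogram p x \<noteq> 0}.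
                      real (histogram p x) * poi (real n * x) j)"

text \<open>Sample multiset represented as a list of n i.i.d. samples.\<close>
fun samples :: "nat \<Rightarrow> 'a pmf \<Rightarrow> 'a list pmf" where
  "samples 0 p = return_pmf []"
| "samples (Suc m) p = bind_pmf p (\<lambda>x. map_pmf (\<lambda>xs. x # xs) (samples m p))"

definition B_S :: "'a pmf \<Rightarrow> nat \<Rightarrow> 'a list \<Rightarrow> nat \<Rightarrow> nat \<Rightarrow> nat" where
  "B_S p n S j k = card {a. in_bucket n k (pmf p a) \<and> count_list S a = j}"

definition faithful :: "'a pmf \<Rightarrow> nat \<Rightarrow> 'a list \<Rightarrow> bool" where
  "faithful p n S \<longleftrightarrow>
     (\<forall>a. 0 < pmf p a \<longrightarrow>
        \<bar>real n * pmf p a - real (count_list S a)\<bar>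
          < max ((ln (real n)) powr 1.5) (sqrt (real n * pmf p a * (ln (real n)) powr 1.5)))
   \<and> (\<forall>j k. real j < (ln (real n))^2 \<longrightarrow>
        \<bar>B_poi p n j k - real (B_S p n S j k)\<bar> < real n powr 0.6)"

end

theory Submission
  imports Defs "HOL-Real_Asymp.Real_Asymp"
begin


lemma finite_samples: "finite (set_pmf p) \<Longrightarrow> finite (set_pmf (samples n p))"
  by (induction n) auto

lemma int_bind_fin:
  fixes f :: "'b \<Rightarrow> real"
  assumes M: "finite (set_pmf M)" and N: "\<And>x. x \<in> set_pmf M \<Longrightarrow> finite (set_pmf (N x))"
  shows "(\<integral>y. f y \<partial>bind_pmf M N) = (\<integral>x. (\<integral>y. f y \<partial>N x) \<partial>M)"
proof -
  define Y where "Y = (\<Union>x\<in>set_pmf M. set_pmf (N x))"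
  have Yf: "finite Y" unfolding Y_def by (rule finite_UN_I[OF M N])
  have "(\<integral>y. f y \<partial>bind_pmf M N) = (\<Sum>y\<in>Y. f y * pmf (bind_pmf M N) y)"
    by (rule integral_measure_pmf_real[OF Yf]) (auto simp: Y_def)
  also have "\<dots> = (\<Sum>y\<in>Y. (\<integral>x. f y * pmf (N x) y \<partial>M))"
    by (simp add: pmf_bind)
  also have "\<dots> = (\<integral>x. (\<Sum>y\<in>Y. f y * pmf (N x) y) \<partial>M)"
    by (rule Bochner_Integration.integral_sum[symmetric]) (auto intro: integrable_measure_pmf_finite M)
  also have "\<dots> = (\<integral>x. (\<integral>y. f y \<partial>N x) \<partial>M)"
  proof (rule integral_cong_AE)
    show "AE x in measure_pmf M. (\<Sum>y\<in>Y. f y * pmf (N x) y) = (\<integral>y. f y \<partial>N x)"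
      by (rule AE_pmfI, rule integral_measure_pmf_real[OF Yf, symmetric]) (auto simp: Y_def)
  qed auto
  finally show ?thesis .
qed

lemma int_samples_Suc:
  fixes f :: "'a list \<Rightarrow> real"
  assumes "finite (set_pmf p)"
  shows "(\<integral>S. f S \<partial>samples (Suc m) p) = (\<integral>x. (\<integral>S. f (x#S) \<partial>samples m p) \<partial>p)"
  by (simp only: samples.simps, subst int_bind_fin) (auto simp: assms finite_samples)

definition bdiff :: "real \<Rightarrow> ('a list \<Rightarrow> real) \<Rightarrow> bool" where
  "bdiff c f \<longleftrightarrow> (\<forall>us v w ws. \<bar>f (us @ v # ws) - f (us @ w # ws)\<bar> \<le> c)"

lemma bdiff_Cons: "bdiff c f \<Longrightarrow> bdiff c (\<lambda>S. f (x # S))"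
  unfolding bdiff_def by (metis append_Cons)

lemma int_bound_pmf:
  fixes h :: "'a \<Rightarrow> real"
  assumes "finite (set_pmf M)" "\<And>x. h x \<le> c"
  shows "(\<integral>x. h x \<partial>M) \<le> c"
proof -
  have "(\<integral>x. h x \<partial>M) \<le> (\<integral>x. c \<partial>M)"
    by (rule integral_mono) (auto intro: integrable_measure_pmf_finite assms)
  then show ?thesis by simp
qed

lemma mgf_bound:
  fixes f :: "'a list \<Rightarrow> real"
  assumes p: "finite (set_pmf p)" and l: "l > 0"
  shows "bdiff c f \<Longrightarrow> (\<integral>S. exp (l * (f S - (\<integral>T. f T \<partial>samples n p))) \<partial>samples n p)
          \<le> exp (l^2 * c^2 * real n / 8)"
proof (induction n arbitrary: f)
  case 0
  then show ?case by simp
next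
  case (Suc m)
  define M where "M = samples m p"
  have Mf: "finite (set_pmf M)" using p by (simp add: M_def finite_samples)
  define g where "g x = (\<integral>S. f (x#S) \<partial>M)" for x
  define E where "E = (\<integral>x. g x \<partial>p)"
  have EE: "(\<integral>T. f T \<partial>samples (Suc m) p) = E"
    unfolding E_def g_def M_def by (rule int_samples_Suc[OF p])
  have gd: "g x - g y \<le> c" for x y
  proof -
    have "g x - g y = (\<integral>S. f (x#S) - f (y#S) \<partial>M)"
      unfolding g_def by (subst Bochner_Integration.integral_diff) (auto intro: integrable_measure_pmf_finite Mf)
    also have "\<dots> \<le> c"
    proof (rule int_bound_pmf[OF Mf])
      fix S show "f (x # S) - f (y # S) \<le> c"
        using Suc.prems unfolding bdiff_def by (metis abs_le_D1 append_Nil)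
    qed
    finally show ?thesis .
  qed
  have inner: "(\<integral>S. exp (l * (f (x#S) - E)) \<partial>M) \<le> exp (l * (g x - E)) * exp (l^2 * c^2 * real m / 8)" for x
  proof -
    have "(\<integral>S. exp (l * (f (x#S) - E)) \<partial>M) = (\<integral>S. exp (l * (g x - E)) * exp (l * (f (x#S) - g x)) \<partial>M)"
      by (rule Bochner_Integration.integral_cong) (auto simp: exp_add[symmetric] algebra_simps)
    also have "\<dots> = exp (l * (g x - E)) * (\<integral>S. exp (l * (f (x#S) - g x)) \<partial>M)"
      by simp
    also have "\<dots> \<le> exp (l * (g x - E)) * exp (l^2 * c^2 * real m / 8)"
      using Suc.IH[OF bdiff_Cons[OF Suc.prems, of x]] unfolding g_def M_def
      by (intro mult_left_mono) auto
    finally show ?thesis .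
  qed
  have "(\<integral>S. exp (l * (f S - (\<integral>T. f T \<partial>samples (Suc m) p))) \<partial>samples (Suc m) p)
      = (\<integral>x. (\<integral>S. exp (l * (f (x#S) - E)) \<partial>M) \<partial>p)"
    unfolding EE M_def by (rule int_samples_Suc[OF p])
  also have "\<dots> \<le> (\<integral>x. exp (l * (g x - E)) * exp (l^2 * c^2 * real m / 8) \<partial>p)"
    by (rule integral_mono) (auto intro: integrable_measure_pmf_finite p inner)
  also have "\<dots> = (\<integral>x. exp (l * (g x - E)) \<partial>p) * exp (l^2 * c^2 * real m / 8)"
    by simp
  also have "(\<integral>x. exp (l * (g x - E)) \<partial>p) \<le> exp (l^2 * c^2 / 8)"
  proof -
    define a where "a = Min (g ` set_pmf p)"
    have ne: "set_pmf p \<noteq> {}" by (rule set_pmf_not_empty)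
    have ga: "x \<in> set_pmf p \<Longrightarrow> g x \<in> {a..a+c}" for x
    proof -
      assume x: "x \<in> set_pmf p"
      have "a \<le> g x" unfolding a_def using x p by auto
      moreover have "a \<in> g ` set_pmf p" unfolding a_def using p ne by (intro Min_in) auto
      then obtain y where y: "y \<in> set_pmf p" "a = g y" by auto
      ultimately show ?thesis using gd[of x y] by auto
    qed
    interpret ibrv: interval_bounded_random_variable "measure_pmf p" g a "a + c"
    proof unfold_locales
      show "AE x in measure_pmf p. g x \<in> {a..a+c}" by (rule AE_pmfI) (rule ga)
    qed simp
    have "E = measure_pmf.expectation p g" by (simp add: E_def)
    have "(\<integral>\<^sup>+x. exp (l * (g x - E)) \<partial>measure_pmf p) \<le> ennreal (exp (l\<^sup>2 * (a + c - a)\<^sup>2 / 8))"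
      unfolding E_def by (rule ibrv.Hoeffdings_lemma_nn_integral[OF l])
    moreover have "(\<integral>\<^sup>+x. exp (l * (g x - E)) \<partial>measure_pmf p) = ennreal (\<integral>x. exp (l * (g x - E)) \<partial>p)"
      by (rule nn_integral_eq_integral) (auto intro: integrable_measure_pmf_finite p)
    ultimately show ?thesis by simp
  qed
  then have "(\<integral>x. exp (l * (g x - E)) \<partial>p) * exp (l^2 * c^2 * real m / 8) \<le> exp (l^2 * c^2 / 8) * exp (l^2 * c^2 * real m / 8)"
    by (intro mult_right_mono) auto
  also have "\<dots> = exp (l^2 * c^2 * real (Suc m) / 8)"
    by (simp add: mult_exp_exp algebra_simps add_divide_distrib)
  finally show ?case .
qed


lemma markov_pmf:
  fixes h :: "'a \<Rightarrow> real"
  assumes "finite (set_pmf M)" "\<And>x. 0 \<le> h x" "s > 0"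
  shows "measure_pmf.prob M {x. s \<le> h x} \<le> (\<integral>x. h x \<partial>M) / s"
  using integral_Markov_inequality_measure[of M h UNIV s] assms
  by (auto intro: integrable_measure_pmf_finite)

lemma mcd_upper:
  fixes f :: "'a list \<Rightarrow> real"
  assumes p: "finite (set_pmf p)" and bd: "bdiff c f" and c: "c > 0" and n: "n > 0" and t: "t > 0"
  shows "measure_pmf.prob (samples n p) {S. t \<le> f S - (\<integral>T. f T \<partial>samples n p)} \<le> exp (-2 * t^2 / (real n * c^2))"
proof -
  define E where "E = (\<integral>T. f T \<partial>samples n p)"
  define l where "l = 4 * t / (real n * c^2)"
  have l: "l > 0" using c n t by (simp add: l_def)
  have "{S. t \<le> f S - E} = {S. exp (l * t) \<le> exp (l * (f S - E))}"
    using l by auto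
  then have "measure_pmf.prob (samples n p) {S. t \<le> f S - E}
      \<le> (\<integral>S. exp (l * (f S - E)) \<partial>samples n p) / exp (l * t)"
    by (simp only:) (rule markov_pmf, auto simp: finite_samples p)
  also have "\<dots> \<le> exp (l^2 * c^2 * real n / 8) / exp (l * t)"
    unfolding E_def by (intro divide_right_mono mgf_bound p l bd) auto
  also have "\<dots> = exp (l^2 * c^2 * real n / 8 - l * t)"
    by (simp add: exp_diff)
  also have "l^2 * c^2 * real n / 8 - l * t = -2 * t^2 / (real n * c^2)"
    using c n unfolding l_def by (simp add: field_simps power2_eq_square)
  finally show ?thesis unfolding E_def .
qed

lemma bdiff_neg: "bdiff c f \<Longrightarrow> bdiff c (\<lambda>S. - f S)"
  unfolding bdiff_def by (metis abs_minus_commute minus_diff_eq minus_diff_minus)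

lemma mcd_abs:
  fixes f :: "'a list \<Rightarrow> real"
  assumes p: "finite (set_pmf p)" and bd: "bdiff c f" and c: "c > 0" and n: "n > 0" and t: "t > 0"
  shows "measure_pmf.prob (samples n p) {S. t \<le> \<bar>f S - (\<integral>T. f T \<partial>samples n p)\<bar>} \<le> 2 * exp (-2 * t^2 / (real n * c^2))"
proof -
  define E where "E = (\<integral>T. f T \<partial>samples n p)"
  have "{S. t \<le> \<bar>f S - E\<bar>} = {S. t \<le> f S - E} \<union> {S. t \<le> (- f S) - (\<integral>T. - f T \<partial>samples n p)}"
    unfolding E_def by auto
  then have "measure_pmf.prob (samples n p) {S. t \<le> \<bar>f S - E\<bar>} \<le>
     measure_pmf.prob (samples n p) {S. t \<le> f S - E} + measure_pmf.prob (samples n p) {S. t \<le> (- f S) - (\<integral>T. - f T \<partial>samples n p)}"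
    by (simp add: measure_Un_le)
  also have "\<dots> \<le> exp (-2 * t^2 / (real n * c^2)) + exp (-2 * t^2 / (real n * c^2))"
    unfolding E_def by (intro add_mono mcd_upper p bd bdiff_neg c n t)
  finally show ?thesis unfolding E_def by simp
qed


lemma int_indicator_pmf: "(\<integral>x. (if x = a then u else v) \<partial>measure_pmf p) = v + (u - v) * pmf p a"
proof -
  have "(\<integral>x. (if x = a then u else v) \<partial>measure_pmf p) = (\<integral>x. v + (u - v) * indicator {a} x \<partial>measure_pmf p)"
    by (rule Bochner_Integration.integral_cong) (auto simp: indicator_def)
  also have "\<dots> = v + (u - v) * pmf p a"
    by (subst Bochner_Integration.integral_add) (auto simp: measure_pmf_single measure_pmf.emeasure_eq_measure intro!: integrable_real_indicator)
  finally show ?thesis .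
qed

lemma int_count_exp:
  assumes p: "finite (set_pmf p)"
  shows "(\<integral>S. exp (lam * real (count_list S a)) \<partial>samples n p) = (1 + pmf p a * (exp lam - 1))^n"
proof (induction n)
  case 0
  then show ?case by simp
next
  case (Suc m)
  have "(\<integral>S. exp (lam * real (count_list S a)) \<partial>samples (Suc m) p)
     = (\<integral>x. (\<integral>S. exp (lam * real (count_list (x#S) a)) \<partial>samples m p) \<partial>p)"
    by (rule int_samples_Suc[OF p])
  also have "\<dots> = (\<integral>x. (if x = a then exp lam else 1) * (1 + pmf p a * (exp lam - 1))^m \<partial>p)"
  proof (rule Bochner_Integration.integral_cong[OF refl])
    fix x
    have "(\<integral>S. exp (lam * real (count_list (x#S) a)) \<partial>samples m p)
        = (\<integral>S. (if x = a then exp lam else 1) * exp (lam * real (count_list S a)) \<partial>samples m p)"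
      by (rule Bochner_Integration.integral_cong) (auto simp: exp_add[symmetric] algebra_simps)
    also have "\<dots> = (if x = a then exp lam else 1) * (1 + pmf p a * (exp lam - 1))^m"
      using Suc.IH by simp
    finally show "(\<integral>S. exp (lam * real (count_list (x#S) a)) \<partial>samples m p) = (if x = a then exp lam else 1) * (1 + pmf p a * (exp lam - 1))^m" .
  qed
  also have "\<dots> = (\<integral>x. (if x = a then exp lam else 1) \<partial>p) * (1 + pmf p a * (exp lam - 1))^m"
    by simp
  also have "\<dots> = (1 + pmf p a * (exp lam - 1))^(Suc m)"
    by (simp add: int_indicator_pmf algebra_simps)
  finally show ?case .
qed

lemma map_eq_bernoulli: "map_pmf (\<lambda>x. x = a) p = bernoulli_pmf (pmf p a)"
proof (rule pmf_eqI)
  fix b :: bool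
  show "pmf (map_pmf (\<lambda>x. x = a) p) b = pmf (bernoulli_pmf (pmf p a)) b"
  proof (cases b)
    case True
    then have "(\<lambda>x. x = a) -` {b} = {a}" by auto
    then show ?thesis using True by (simp add: pmf_map measure_pmf_single pmf_le_1)
  next
    case False
    then have "(\<lambda>x. x = a) -` {b} = UNIV - {a}" by auto
    then show ?thesis using False
      using measure_pmf.prob_compl[of "{a}" p] by (simp add: pmf_map measure_pmf_single pmf_le_1)
  qed
qed

lemma count_binomial: "map_pmf (\<lambda>S. count_list S a) (samples n p) = binomial_pmf n (pmf p a)"
proof (induction n)
  case 0
  then show ?case by (simp add: binomial_pmf_0 pmf_le_1)
next
  case (Suc m)
  have "map_pmf (\<lambda>S. count_list S a) (samples (Suc m) p)
     = bind_pmf p (\<lambda>x. map_pmf (\<lambda>k. (if x = a then 1 else 0) + k) (map_pmf (\<lambda>S. count_list S a) (samples m p)))"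
    by (auto simp: map_bind_pmf pmf.map_comp o_def intro!: bind_pmf_cong map_pmf_cong)
  also have "\<dots> = bind_pmf (map_pmf (\<lambda>x. x = a) p) (\<lambda>b. map_pmf (\<lambda>k. (if b then 1 else 0) + k) (binomial_pmf m (pmf p a)))"
    by (simp add: bind_map_pmf Suc.IH)
  also have "\<dots> = binomial_pmf (Suc m) (pmf p a)"
    by (simp add: map_eq_bernoulli binomial_pmf_Suc pmf_le_1 map_pmf_def)
  finally show ?case .
qed

lemma prob_count_eq:
  "measure_pmf.prob (samples n p) {S. count_list S a = j} = real (n choose j) * pmf p a ^ j * (1 - pmf p a) ^ (n - j)"
proof -
  have "measure_pmf.prob (samples n p) {S. count_list S a = j} = pmf (map_pmf (\<lambda>S. count_list S a) (samples n p)) j"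
    by (simp add: pmf_map vimage_def)
  then show ?thesis by (simp add: count_binomial pmf_le_1)
qed


lemma pow_exp_bound:
  assumes "0 \<le> x" "x \<le> 1"
  shows "(1 + x * (exp s - 1))^n \<le> exp (real n * x * (exp s - 1))"
proof -
  have "0 \<le> 1 + x * (exp s - 1)"
  proof -
    have "x * (exp s - 1) \<ge> x * (-1)" using assms by (intro mult_left_mono) auto
    then show ?thesis using assms by linarith
  qed
  then have "(1 + x * (exp s - 1))^n \<le> (exp (x * (exp s - 1)))^n"
    by (intro power_mono) auto
  also have "\<dots> = exp (real n * x * (exp s - 1))"
    by (simp add: exp_of_nat_mult[symmetric] algebra_simps)
  finally show ?thesis .
qed

lemma exp_minus_bound: "0 \<le> (l::real) \<Longrightarrow> exp (-l) \<le> 1 - l + l^2"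
proof -
  assume l: "0 \<le> l"
  have "exp (-l) = 1 / exp l" by (simp add: exp_minus field_simps)
  also have "\<dots> \<le> 1 / (1 + l)" using l by (intro divide_left_mono) (auto simp: add_pos_nonneg)
  also have "\<dots> \<le> 1 - l + l^2"
    using l by (simp add: field_simps power2_eq_square)
  finally show ?thesis .
qed

lemma choose_lambda:
  fixes mu M L :: real
  assumes mu: "mu > 0" and M: "M > 0" "M \<ge> L" "M^2 \<ge> mu * L"
  shows "\<exists>l. 0 < l \<and> l \<le> 1 \<and> mu * l^2 - l * M \<le> - L / 4"
proof (cases "M \<le> mu")
  case True
  define lam where "lam = M / (2 * mu)"
  have "mu * lam^2 - lam * M = - (M^2) / (4 * mu)"
    using mu unfolding lam_def by (simp add: field_simps power2_eq_square)
  also have "\<dots> \<le> - L / 4"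
    using mu M by (simp add: field_simps)
  finally show ?thesis using True mu M by (intro exI[of _ lam]) (auto simp: lam_def field_simps)
next
  case False
  have "mu * (1/2)^2 - (1/2) * M \<le> - L / 4" using False M by (simp add: power2_eq_square)
  then show ?thesis by (intro exI[of _ "1/2"]) auto
qed

lemma chernoff_count:
  assumes p: "finite (set_pmf p)" and mu: "mu = real n * pmf p a" "mu > 0"
    and M: "M > 0" "M \<ge> L" "M^2 \<ge> mu * L"
  shows "measure_pmf.prob (samples n p) {S. M \<le> \<bar>mu - real (count_list S a)\<bar>} \<le> 2 * exp (- L / 4)"
proof -
  define x where "x = pmf p a"
  have x: "0 \<le> x" "x \<le> 1" by (auto simp: x_def pmf_le_1)
  obtain l where l: "0 < l" "l \<le> 1" "mu * l^2 - l * M \<le> - L / 4"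
    using choose_lambda[OF mu(2) M] by blast
  define c where "c S = real (count_list S a)" for S
  have fin: "finite (set_pmf (samples n p))" using p by (rule finite_samples)
  have up: "measure_pmf.prob (samples n p) {S. mu + M \<le> c S} \<le> exp (- L / 4)"
  proof -
    have "{S. mu + M \<le> c S} = {S. exp (l * (mu + M)) \<le> exp (l * c S)}"
      using l by auto
    then have "measure_pmf.prob (samples n p) {S. mu + M \<le> c S} \<le> (\<integral>S. exp (l * c S) \<partial>samples n p) / exp (l * (mu + M))"
      by (simp only:) (rule markov_pmf[OF fin], auto)
    also have "\<dots> = (1 + x * (exp l - 1))^n / exp (l * (mu + M))"
      unfolding c_def x_def by (simp add: int_count_exp[OF p])
    also have "\<dots> \<le> exp (real n * x * (exp l - 1)) / exp (l * (mu + M))"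
      by (intro divide_right_mono pow_exp_bound x) auto
    also have "\<dots> = exp (mu * (exp l - 1 - l) - l * M)"
      by (simp add: exp_diff[symmetric] mu x_def algebra_simps)
    also have "\<dots> \<le> exp (mu * l^2 - l * M)"
    proof -
      have "exp l - 1 - l \<le> l^2" using exp_bound[of l] l by simp
      then show ?thesis using mu by (simp add: mult_left_mono)
    qed
    also have "\<dots> \<le> exp (- L / 4)" using l by simp
    finally show ?thesis .
  qed
  have lo: "measure_pmf.prob (samples n p) {S. c S \<le> mu - M} \<le> exp (- L / 4)"
  proof -
    have "{S. c S \<le> mu - M} = {S. exp ((-l) * (mu - M)) \<le> exp ((-l) * c S)}"
      using l by auto
    then have "measure_pmf.prob (samples n p) {S. c S \<le> mu - M} \<le> (\<integral>S. exp ((-l) * c S) \<partial>samples n p) / exp ((-l) * (mu - M))"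
      by (simp only:) (rule markov_pmf[OF fin], auto)
    also have "\<dots> = (1 + x * (exp (-l) - 1))^n / exp ((-l) * (mu - M))"
      unfolding c_def x_def using int_count_exp[OF p, where lam="-l" and a=a and n=n] by simp
    also have "\<dots> \<le> exp (real n * x * (exp (-l) - 1)) / exp ((-l) * (mu - M))"
      by (intro divide_right_mono pow_exp_bound x) auto
    also have "\<dots> = exp (mu * (exp (-l) - 1 + l) - l * M)"
      by (simp add: exp_diff[symmetric] mu x_def algebra_simps)
    also have "\<dots> \<le> exp (mu * l^2 - l * M)"
    proof -
      have "exp (-l) - 1 + l \<le> l^2" using exp_minus_bound[of l] l by simp
      then show ?thesis using mu by (simp add: mult_left_mono)
    qed
    also have "\<dots> \<le> exp (- L / 4)" using l by simp
    finally show ?thesis .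
  qed
  have "{S. M \<le> \<bar>mu - real (count_list S a)\<bar>} = {S. mu + M \<le> c S} \<union> {S. c S \<le> mu - M}"
    unfolding c_def by auto
  then have "measure_pmf.prob (samples n p) {S. M \<le> \<bar>mu - real (count_list S a)\<bar>}
     \<le> measure_pmf.prob (samples n p) {S. mu + M \<le> c S} + measure_pmf.prob (samples n p) {S. c S \<le> mu - M}"
    by (simp add: measure_Un_le)
  also have "\<dots> \<le> 2 * exp (- L / 4)" using up lo by simp
  finally show ?thesis .
qed

lemma expm1_bound: "0 \<le> (y::real) \<Longrightarrow> y \<le> 1 \<Longrightarrow> exp y - 1 \<le> 3 * y"
proof -
  assume y: "0 \<le> y" "y \<le> 1"
  have "1 - y \<le> exp (-y)" using exp_ge_add_one_self[of "-y"] by simp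
  then have "exp y * (1 - y) \<le> exp y * exp (-y)" by (intro mult_left_mono) auto
  then have "exp y - 1 \<le> y * exp y" by (simp add: exp_minus field_simps)
  also have "\<dots> \<le> y * 3"
  proof -
    have "exp y \<le> 3" using exp_le exp_mono[OF y(2)] by linarith
    then show ?thesis using y by (intro mult_left_mono) auto
  qed
  finally show ?thesis by simp
qed

lemma small_tail:
  assumes p: "finite (set_pmf p)" and small: "real n * pmf p a \<le> 1/2" and L: "L > 0"
  shows "measure_pmf.prob (samples n p) {S. L \<le> real (count_list S a)} \<le> 6 * (real n * pmf p a) / (exp L - 1)"
proof -
  define x where "x = pmf p a"
  have x: "0 \<le> x" "x \<le> 1" by (auto simp: x_def pmf_le_1)
  have fin: "finite (set_pmf (samples n p))" using p by (rule finite_samples)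
  have eL: "exp L - 1 > 0" using L by simp
  have "{S. L \<le> real (count_list S a)} = {S. exp L - 1 \<le> exp (1 * real (count_list S a)) - 1}"
    by auto
  then have "measure_pmf.prob (samples n p) {S. L \<le> real (count_list S a)}
      \<le> (\<integral>S. exp (1 * real (count_list S a)) - 1 \<partial>samples n p) / (exp L - 1)"
    by (simp only:) (rule markov_pmf[OF fin], auto simp: eL L)
  also have "(\<integral>S. exp (1 * real (count_list S a)) - 1 \<partial>samples n p) = (1 + x * (exp 1 - 1))^n - 1"
    by (subst Bochner_Integration.integral_diff) (use int_count_exp[OF p, where lam=1 and a=a and n=n] in \<open>auto intro: integrable_measure_pmf_finite fin simp: x_def\<close>)
  also have "\<dots> \<le> exp (real n * x * (exp 1 - 1)) - 1"
    using pow_exp_bound[OF x, of 1 n] by simp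
  also have "\<dots> \<le> 3 * (real n * x * (exp 1 - 1))"
  proof (rule expm1_bound)
    show "0 \<le> real n * x * (exp 1 - 1)" using x by simp
    have "real n * x * (exp 1 - 1) \<le> (1/2) * 2"
      using small exp_le x by (intro mult_mono) (auto simp: x_def)
    then show "real n * x * (exp 1 - 1) \<le> 1" by simp
  qed
  also have "\<dots> \<le> 6 * (real n * x)"
  proof -
    have "real n * x * (exp 1 - 1) \<le> real n * x * 2"
      using exp_le x by (intro mult_left_mono) auto
    then show ?thesis by (simp add: algebra_simps)
  qed
  finally show ?thesis using eL unfolding x_def by (simp add: divide_right_mono)
qed


lemma pow_fact_le_exp:
  fixes y :: real assumes y: "0 \<le> y"
  shows "y ^ j / fact j \<le> exp y"
proof -
  have s: "(\<lambda>k. y^k / fact k) sums exp y"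
    using exp_converges[of y] by (simp add: divide_inverse_commute scaleR_conv_of_real)
  have e: "(\<Sum>k<Suc j. y^k / fact k) = (\<Sum>k<j. y^k / fact k) + y^j / fact j"
    by (rule sum.lessThan_Suc)
  have "(\<Sum>k<j. y^k / (fact k :: real)) \<ge> 0" by (intro sum_nonneg) (use y in auto)
  then have "y ^ j / fact j \<le> (\<Sum>k<Suc j. y^k / fact k)"
    unfolding e by linarith
  also have "\<dots> \<le> (\<Sum>k. y^k / fact k)"
    by (rule sum_le_suminf[OF sums_summable[OF s]]) (use y in auto)
  also have "\<dots> = exp y" using sums_unique[OF s] by simp
  finally show ?thesis .
qed

lemma poi_nonneg: "0 \<le> y \<Longrightarrow> 0 \<le> poi y j"
  by (simp add: poi_def)

lemma poi_le_1: "0 \<le> y \<Longrightarrow> poi y j \<le> 1"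
proof -
  assume y: "0 \<le> y"
  have "exp (-y) * y ^ j / fact j = exp (-y) * (y ^ j / fact j)" by simp
  also have "\<dots> \<le> exp (-y) * exp y" using pow_fact_le_exp[OF y] by (intro mult_left_mono) auto
  finally show ?thesis by (simp add: poi_def exp_minus field_simps)
qed

lemma poi_le_y: "0 \<le> y \<Longrightarrow> j \<ge> 1 \<Longrightarrow> poi y j \<le> y"
proof -
  assume y: "0 \<le> y" and j: "j \<ge> 1"
  then obtain i where i: "j = Suc i" by (cases j) auto
  have "poi y j = y * (exp (-y) * (y ^ i / fact i)) / real (Suc i)"
    unfolding poi_def i by (simp add: field_simps)
  also have "\<dots> \<le> y * (exp (-y) * exp y) / 1"
    using y pow_fact_le_exp[OF y, of i]
    by (intro divide_mono mult_left_mono) auto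
  finally show ?thesis by (simp add: exp_minus)
qed

lemma prod_upper: "j \<le> n \<Longrightarrow> (\<Prod>i=0..<j. real n - real i) \<le> real n ^ j"
proof (induction j)
  case 0 then show ?case by simp
next
  case (Suc j)
  have "(\<Prod>i=0..<Suc j. real n - real i) = (\<Prod>i=0..<j. real n - real i) * (real n - real j)" by simp
  also have "\<dots> \<le> real n ^ j * real n"
    using Suc by (intro mult_mono) (auto intro: prod_nonneg)
  finally show ?case by (simp add: mult.commute)
qed

lemma prod_lower: "j \<le> n \<Longrightarrow> n > 0 \<Longrightarrow> (\<Prod>i=0..<j. real n - real i) \<ge> real n ^ j * (1 - real j ^ 2 / real n)"
proof (induction j)
  case 0 then show ?case by simp
next
  case (Suc j)
  have nj: "real n - real j \<ge> 0" using Suc.prems by simp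
  have "real n ^ Suc j * (1 - real (Suc j) ^ 2 / real n) \<le> real n ^ j * (1 - real j ^ 2 / real n) * (real n - real j)"
  proof -
    have n: "real n > 0" using Suc by simp
    have eq: "\<And>A B::real. (1 - A) * (1 - B) = 1 - A - B + A * B" by algebra
    have eqA: "real n ^ j * (1 - real j ^ 2 / real n) * (real n - real j)
       = real n ^ Suc j * ((1 - real j ^ 2 / real n) * (1 - real j / real n))"
      using n by (simp add: field_simps)
    have ineqB: "(1 - real (Suc j) ^ 2 / real n) \<le> (1 - real j ^ 2 / real n) * (1 - real j / real n)"
    proof -
      have "(1 - real j ^ 2 / real n) * (1 - real j / real n) = 1 - real j ^ 2 / real n - real j / real n + (real j ^ 2 / real n) * (real j / real n)"
        by (rule eq)
      moreover have "(real j ^ 2 / real n) * (real j / real n) \<ge> 0" by simp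
      moreover have "real (Suc j) ^ 2 / real n \<ge> real j ^ 2 / real n + real j / real n"
        using n by (simp add: field_simps power2_eq_square)
      ultimately show ?thesis by linarith
    qed
    have "real n ^ Suc j * (1 - real (Suc j) ^ 2 / real n) \<le> real n ^ Suc j * ((1 - real j ^ 2 / real n) * (1 - real j / real n))"
      by (rule mult_left_mono[OF ineqB]) simp
    then show ?thesis by (simp only: eqA)
  qed
  also have "\<dots> \<le> (\<Prod>i=0..<j. real n - real i) * (real n - real j)"
  proof -
    have "Suc j \<le> n" "n > 0" using Suc.prems by auto
    then have IH': "real n ^ j * (1 - real j ^ 2 / real n) \<le> (\<Prod>i=0..<j. real n - real i)"
      using Suc.IH by simp
    show ?thesis by (rule mult_right_mono[OF IH' nj])
  qed
  finally have fin: "real n ^ Suc j * (1 - real (Suc j) ^ 2 / real n) \<le> (\<Prod>i=0..<j. real n - real i) * (real n - real j)" .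
  have pe: "(\<Prod>i=0..<Suc j. real n - real i) = (\<Prod>i=0..<j. real n - real i) * (real n - real j)"
    by (rule prod.atLeast0_lessThan_Suc)
  show ?case unfolding pe by (rule fin)
qed


lemma fact_choose: "fact j * real (n choose j) = (\<Prod>i=0..<j. real n - real i)"
  by (simp add: binomial_gbinomial gbinomial_mult_fact)

lemma exp_minus_bound': "0 \<le> (l::real) \<Longrightarrow> exp (-l) - (1 - l) \<le> l^2"
proof -
  assume l: "0 \<le> l"
  have "exp (-l) = 1 / exp l" by (simp add: exp_minus field_simps)
  also have "\<dots> \<le> 1 / (1 + l)" using l by (intro divide_left_mono) (auto simp: add_pos_nonneg)
  also have "\<dots> \<le> 1 - l + l^2"
    using l by (simp add: field_simps power2_eq_square)
  finally show ?thesis by simp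
qed

lemma expm1_bound': "0 \<le> (y::real) \<Longrightarrow> y \<le> 1 \<Longrightarrow> exp y - 1 \<le> 3 * y"
proof -
  assume y: "0 \<le> y" "y \<le> 1"
  have "1 - y \<le> exp (-y)" using exp_ge_add_one_self[of "-y"] by simp
  then have "exp y * (1 - y) \<le> exp y * exp (-y)" by (intro mult_left_mono) auto
  then have "exp y - 1 \<le> y * exp y" by (simp add: exp_minus field_simps)
  also have "\<dots> \<le> y * 3"
  proof -
    have "exp y \<le> 3" using exp_le exp_mono[OF y(2)] by linarith
    then show ?thesis using y by (intro mult_left_mono) auto
  qed
  finally show ?thesis by simp
qed

lemma pow_diff_le:
  fixes u v :: real assumes "0 \<le> u" "u \<le> v"
  shows "v ^ m - u ^ m \<le> real m * v ^ (m - 1) * (v - u)"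
proof (induction m)
  case 0 then show ?case by simp
next
  case (Suc m)
  have "v ^ Suc m - u ^ Suc m = v * (v ^ m - u ^ m) + u ^ m * (v - u)" by (simp add: algebra_simps)
  also have "\<dots> \<le> v * (real m * v ^ (m - 1) * (v - u)) + v ^ m * (v - u)"
  proof (rule add_mono)
    show "v * (v ^ m - u ^ m) \<le> v * (real m * v ^ (m - 1) * (v - u))"
      using assms Suc.IH by (intro mult_left_mono) auto
    show "u ^ m * (v - u) \<le> v ^ m * (v - u)"
      using assms by (intro mult_right_mono power_mono) auto
  qed
  also have "\<dots> = real (Suc m) * v ^ m * (v - u)"
  proof (cases m)
    case 0 then show ?thesis by simp
  next
    case (Suc k) then show ?thesis by (simp add: algebra_simps)
  qed
  finally show ?case by simp
qed


lemma binom_poi: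
  assumes n: "n \<ge> 1" "j \<le> n" and x: "0 \<le> x" "x \<le> 1" "real j * x \<le> 1"
  shows "\<bar>real (n choose j) * x^j * (1-x)^(n-j) - poi (real n * x) j\<bar>
           \<le> 3 * real j^2 * x + 3 * real j * x + 9 * real n * x^2"
proof -
  define m where "m = n - j"
  have nm: "n = m + j" using n by (simp add: m_def)
  define q where "q = (real n * x)^j / fact j"
  define P where "P = poi (real n * x) j"
  define C where "C = real (n choose j) * x^j"
  have q0: "q \<ge> 0" using x by (simp add: q_def)
  have P0: "P \<ge> 0" using x by (simp add: P_def poi_nonneg)
  have P1: "P \<le> 1" using x by (simp add: P_def poi_le_1)
  have Pq: "P = exp (- (real n * x)) * q" by (simp add: P_def poi_def q_def)
  have nj0: "real n > 0" using n by simp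
  have fc: "fact j * real (n choose j) = (\<Prod>i=0..<j. real n - real i)" by (rule fact_choose)
  have Cq: "C \<le> q"
  proof -
    have "fact j * real (n choose j) \<le> real n ^ j" using fc prod_upper[OF n(2)] by simp
    then have "real (n choose j) \<le> real n ^ j / fact j" by (simp add: field_simps)
    then have "real (n choose j) * x^j \<le> real n ^ j / fact j * x^j" using x by (intro mult_right_mono) auto
    then show ?thesis by (simp add: C_def q_def power_mult_distrib)
  qed
  have qC: "q - C \<le> real j^2 / real n * q"
  proof -
    have "fact j * real (n choose j) \<ge> real n ^ j * (1 - real j ^ 2 / real n)"
      using fc prod_lower[OF n(2)] n by simp
    then have "real (n choose j) \<ge> real n ^ j * (1 - real j ^ 2 / real n) / fact j" by (simp add: field_simps)
    then have "real (n choose j) * x^j \<ge> real n ^ j * (1 - real j ^ 2 / real n) / fact j * x^j"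
      using x by (intro mult_right_mono) auto
    then have "C \<ge> q * (1 - real j ^ 2 / real n)"
      by (simp add: C_def q_def power_mult_distrib field_simps)
    then show ?thesis by (simp add: algebra_simps)
  qed
  have em: "exp (- (real m * x)) = exp (- (real n * x)) * exp (real j * x)"
    by (simp add: nm exp_add[symmetric] algebra_simps)
  have pm: "(1 - x)^m \<le> exp (- (real m * x))"
  proof -
    have "(1 - x)^m \<le> exp (-x)^m"
      using x exp_ge_add_one_self[of "-x"] by (intro power_mono) auto
    also have "\<dots> = exp (- (real m * x))" by (simp add: exp_of_nat_mult[symmetric])
    finally show ?thesis .
  qed
  have pm0: "0 \<le> (1 - x)^m" using x by simp
  have ejx: "exp (real j * x) \<le> 3"
    using exp_mono[OF x(3)] exp_le by linarith
  define T1 where "T1 = (q - C) * (1 - x)^m"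
  define T2 where "T2 = q * (exp (- (real m * x)) - (1 - x)^m)"
  define T3 where "T3 = q * (exp (- (real m * x)) - exp (- (real n * x)))"
  have T1: "0 \<le> T1" "T1 \<le> 3 * real j^2 * x"
  proof -
    show "0 \<le> T1" using Cq pm0 by (simp add: T1_def)
    have "T1 \<le> real j^2 / real n * q * exp (- (real m * x))"
      unfolding T1_def using qC pm pm0 q0 Cq
      by (intro mult_mono) (auto intro!: mult_nonneg_nonneg)
    also have "\<dots> = real j^2 / real n * P * exp (real j * x)"
      by (simp add: em Pq)
    also have "\<dots> \<le> real j^2 / real n * P * 3"
      using P0 ejx by (intro mult_left_mono) auto
    also have "real j^2 / real n * P \<le> real j^2 * x"
    proof (cases "j = 0")
      case True then show ?thesis by simp
    next
      case False
      then have "P \<le> real n * x" unfolding P_def using x by (intro poi_le_y) auto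
      then have "real j^2 / real n * P \<le> real j^2 / real n * (real n * x)"
        by (intro mult_left_mono) auto
      then show ?thesis using nj0 by simp
    qed
    then have "real j^2 / real n * P * 3 \<le> real j^2 * x * 3" by (rule mult_right_mono) simp
    finally show "T1 \<le> 3 * real j^2 * x" by simp
  qed
  have T2: "0 \<le> T2" "T2 \<le> 9 * real n * x^2"
  proof -
    show "0 \<le> T2" using pm q0 by (simp add: T2_def)
    show "T2 \<le> 9 * real n * x^2"
    proof (cases m)
      case 0 then show ?thesis by (simp add: T2_def)
    next
      case (Suc k)
      have "exp (- (real m * x)) - (1 - x)^m = exp (-x)^m - (1 - x)^m"
        by (simp add: exp_of_nat_mult[symmetric])
      also have "\<dots> \<le> real m * exp (-x)^(m-1) * (exp (-x) - (1 - x))"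
        using x exp_ge_add_one_self[of "-x"] by (intro pow_diff_le) auto
      also have "\<dots> \<le> real m * exp (-x)^(m-1) * x^2"
        using exp_minus_bound'[OF x(1)] by (intro mult_left_mono) auto
      finally have d: "exp (- (real m * x)) - (1 - x)^m \<le> real m * exp (-x)^k * x^2" using Suc by simp
      have "q * exp (-x)^k = P * exp ((real j + 1) * x)"
        using Suc by (simp add: Pq nm exp_of_nat_mult[symmetric] exp_add[symmetric] algebra_simps)
      also have "\<dots> \<le> 1 * 9"
      proof (intro mult_mono)
        have "exp ((real j + 1) * x) \<le> exp 2" using x by (simp add: algebra_simps)
        also have "exp 2 = exp 1 * exp (1::real)" by (simp add: exp_add[symmetric])
        also have "\<dots> \<le> 3 * 3" using exp_le by (intro mult_mono) auto
        finally show "exp ((real j + 1) * x) \<le> 9" by simp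
      qed (use P1 in auto)
      finally have qe: "q * exp (-x)^k \<le> 9" by simp
      have "T2 \<le> q * (real m * exp (-x)^k * x^2)"
        unfolding T2_def using d q0 by (intro mult_left_mono) auto
      also have "\<dots> = (q * exp (-x)^k) * (real m * x^2)" by simp
      also have "\<dots> \<le> 9 * (real n * x^2)"
        using qe nm by (intro mult_mono) auto
      finally show ?thesis by simp
    qed
  qed
  have T3: "0 \<le> T3" "T3 \<le> 3 * real j * x"
  proof -
    have e: "T3 = P * (exp (real j * x) - 1)"
      unfolding T3_def em Pq by (simp add: algebra_simps)
    show "0 \<le> T3" unfolding e using P0 x by simp
    have "T3 \<le> 1 * (3 * (real j * x))"
      unfolding e using P0 P1 x by (intro mult_mono expm1_bound') auto
    then show "T3 \<le> 3 * real j * x" by simp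
  qed
  have e1: "real (n choose j) * x^j * (1-x)^(n-j) - poi (real n * x) j = C * (1-x)^m - exp (-(real n * x)) * q"
    unfolding C_def m_def Pq[symmetric] P_def by simp
  have e2: "C * (1-x)^m - exp (-(real n * x)) * q = - T1 - T2 + T3"
    unfolding T1_def T2_def T3_def by (simp add: algebra_simps)
  have "real (n choose j) * x^j * (1-x)^(n-j) - poi (real n * x) j = - T1 - T2 + T3"
    using e1 e2 by simp
  then show ?thesis using T1 T2 T3 by linarith
qed


definition bucketset :: "'a pmf \<Rightarrow> nat \<Rightarrow> nat \<Rightarrow> 'a set" where
  "bucketset p n k = {a. in_bucket n k (pmf p a)}"

lemma in_bucket_pos: "in_bucket n k x \<Longrightarrow> 0 < x"
proof -
  assume "in_bucket n k x"
  then have "real k / (real n * (ln (real n))^2) < x" by (simp add: in_bucket_def)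
  moreover have "0 \<le> real k / (real n * (ln (real n))^2)" by simp
  ultimately show ?thesis by linarith
qed

lemma bucketset_sub: "bucketset p n k \<subseteq> set_pmf p"
proof
  fix a assume "a \<in> bucketset p n k"
  then have "in_bucket n k (pmf p a)" by (simp add: bucketset_def)
  then have "pmf p a > 0" by (rule in_bucket_pos)
  then show "a \<in> set_pmf p" by (simp add: set_pmf_iff)
qed

lemma finite_bucketset: "finite (set_pmf p) \<Longrightarrow> finite (bucketset p n k)"
  by (rule finite_subset[OF bucketset_sub])

lemma sum_pmf_le1: "finite A \<Longrightarrow> (\<Sum>a\<in>A. pmf p a) \<le> 1"
  by (metis measure_measure_pmf_finite measure_pmf.prob_le_1)

lemma card_big:
  assumes "finite A" "t > 0" "\<And>a. a \<in> A \<Longrightarrow> t \<le> pmf p a"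
  shows "real (card A) \<le> 1 / t"
proof -
  have "real (card A) * t \<le> (\<Sum>a\<in>A. pmf p a)" by (rule sum_bounded_below) (use assms in auto)
  also have "\<dots> \<le> 1" using assms by (intro sum_pmf_le1)
  finally show ?thesis using assms by (simp add: field_simps)
qed

lemma BS_sum:
  assumes "finite (set_pmf p)"
  shows "real (B_S p n S j k) = (\<Sum>a\<in>bucketset p n k. if count_list S a = j then 1 else 0)"
proof -
  have "{a. in_bucket n k (pmf p a) \<and> count_list S a = j} = {a \<in> bucketset p n k. count_list S a = j}"
    by (auto simp: bucketset_def)
  then have "real (B_S p n S j k) = (\<Sum>a\<in>{a \<in> bucketset p n k. count_list S a = j}. 1)"
    by (simp add: B_S_def)
  also have "\<dots> = (\<Sum>a\<in>bucketset p n k. if count_list S a = j then 1 else 0)"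
    by (rule sum.inter_filter) (rule finite_bucketset[OF assms])
  finally show ?thesis .
qed

lemma B_poi_sum:
  assumes fin: "finite (set_pmf p)"
  shows "B_poi p n j k = (\<Sum>a\<in>bucketset p n k. poi (real n * pmf p a) j)"
proof -
  define A where "A = bucketset p n k"
  have Af: "finite A" using fin by (simp add: A_def finite_bucketset)
  define X where "X = {x. 0 < x \<and> x \<le> 1 \<and> in_bucket n k x \<and> histogram p x \<noteq> 0}"
  have hist: "histogram p x = card {a \<in> A. pmf p a = x}" if "x \<in> pmf p ` A" for x
  proof -
    have "{a. pmf p a = x} = {a \<in> A. pmf p a = x}"
      using that by (auto simp: A_def bucketset_def)
    then show ?thesis by (simp add: histogram_def)
  qed
  have XA: "X = pmf p ` A"
  proof
    show "X \<subseteq> pmf p ` A"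
    proof
      fix x assume x: "x \<in> X"
      then have "card {a. pmf p a = x} \<noteq> 0" by (simp add: X_def histogram_def)
      then obtain a where "pmf p a = x" by (metis (mono_tags, lifting) Collect_empty_eq card.empty)
      then show "x \<in> pmf p ` A" using x by (auto simp: X_def A_def bucketset_def)
    qed
    show "pmf p ` A \<subseteq> X"
    proof
      fix x assume x: "x \<in> pmf p ` A"
      then obtain a where a: "a \<in> A" "x = pmf p a" by auto
      have "0 < x" using a in_bucket_pos by (auto simp: A_def bucketset_def)
      moreover have "x \<le> 1" using a by (simp add: pmf_le_1)
      moreover have "histogram p x \<noteq> 0"
        using hist[OF x] a Af by auto
      ultimately show "x \<in> X" using a by (auto simp: X_def A_def bucketset_def)
    qed
  qed
  have "(\<Sum>a\<in>A. poi (real n * pmf p a) j) = (\<Sum>y\<in>pmf p ` A. (\<Sum>a\<in>{a \<in> A. pmf p a = y}. poi (real n * pmf p a) j))"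
    by (rule sum.image_gen[OF Af])
  also have "\<dots> = (\<Sum>y\<in>pmf p ` A. real (histogram p y) * poi (real n * y) j)"
    by (rule sum.cong[OF refl]) (simp add: hist)
  finally show ?thesis unfolding B_poi_def X_def[symmetric] XA A_def by simp
qed

lemma E_BS:
  assumes fin: "finite (set_pmf p)"
  shows "(\<integral>S. real (B_S p n S j k) \<partial>samples n p)
     = (\<Sum>a\<in>bucketset p n k. real (n choose j) * pmf p a ^ j * (1 - pmf p a) ^ (n - j))"
proof -
  have "(\<integral>S. real (B_S p n S j k) \<partial>samples n p)
     = (\<integral>S. (\<Sum>a\<in>bucketset p n k. indicator {S. count_list S a = j} S) \<partial>samples n p)"
    by (rule Bochner_Integration.integral_cong[OF refl]) (simp add: BS_sum[OF fin] indicator_def of_bool_def)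
  also have "\<dots> = (\<Sum>a\<in>bucketset p n k. (\<integral>S. indicator {S. count_list S a = j} S \<partial>samples n p))"
    by (rule Bochner_Integration.integral_sum) (auto intro: integrable_measure_pmf_finite finite_samples fin)
  also have "\<dots> = (\<Sum>a\<in>bucketset p n k. real (n choose j) * pmf p a ^ j * (1 - pmf p a) ^ (n - j))"
    by (rule sum.cong[OF refl]) (simp add: prob_count_eq)
  finally show ?thesis .
qed

lemma bdiff_BS:
  assumes fin: "finite (set_pmf p)"
  shows "bdiff 2 (\<lambda>S. real (B_S p n S j k))"
  unfolding bdiff_def
proof (intro allI)
  fix us ws :: "'a list" and v w :: 'a
  define A where "A = bucketset p n k"
  have Af: "finite A" using fin by (simp add: A_def finite_bucketset)
  define g where "g a = (if count_list (us @ v # ws) a = j then 1 else 0) - (if count_list (us @ w # ws) a = j then 1 else (0::real))" for a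
  have "real (B_S p n (us @ v # ws) j k) - real (B_S p n (us @ w # ws) j k) = (\<Sum>a\<in>A. g a)"
    by (simp add: BS_sum[OF fin] A_def g_def sum_subtractf)
  also have "\<dots> = (\<Sum>a\<in>A \<inter> {v, w}. g a)"
    by (rule sum.mono_neutral_right) (auto simp: Af g_def)
  finally have e: "real (B_S p n (us @ v # ws) j k) - real (B_S p n (us @ w # ws) j k) = (\<Sum>a\<in>A \<inter> {v, w}. g a)" .
  have "\<bar>\<Sum>a\<in>A \<inter> {v, w}. g a\<bar> \<le> (\<Sum>a\<in>A \<inter> {v, w}. \<bar>g a\<bar>)" by (rule sum_abs)
  also have "\<dots> \<le> (\<Sum>a\<in>A \<inter> {v, w}. 1)" by (rule sum_mono) (auto simp: g_def)
  also have "\<dots> = real (card (A \<inter> {v, w}))" by simp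
  also have "\<dots> \<le> 2"
  proof -
    have "card (A \<inter> {v, w}) \<le> card {v, w}" by (rule card_mono) auto
    also have "\<dots> \<le> 2" by (simp add: card_insert_if)
    finally show ?thesis by simp
  qed
  finally show "\<bar>real (B_S p n (us @ v # ws) j k) - real (B_S p n (us @ w # ws) j k)\<bar> \<le> 2"
    using e by simp
qed


lemma E_close:
  assumes fin: "finite (set_pmf p)" and n: "n \<ge> 1" and j: "real j < L2" and th: "\<theta> > 0"
    and L2th: "L2 * \<theta> \<le> 1" and L2n: "L2 \<le> real n"
  shows "\<bar>(\<integral>S. real (B_S p n S j k) \<partial>samples n p) - B_poi p n j k\<bar>
          \<le> 3 * L2^2 + 3 * L2 + 9 * real n * \<theta> + 1 / \<theta>"
proof -
  define A where "A = bucketset p n k"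
  have Af: "finite A" using fin by (simp add: A_def finite_bucketset)
  define b where "b a = real (n choose j) * pmf p a ^ j * (1 - pmf p a) ^ (n - j)" for a
  define \<pi> where "\<pi> a = poi (real n * pmf p a) j" for a
  define Sm where "Sm = {a \<in> A. pmf p a \<le> \<theta>}"
  define Bg where "Bg = {a \<in> A. \<not> pmf p a \<le> \<theta>}"
  have SmBg: "A = Sm \<union> Bg" "Sm \<inter> Bg = {}" by (auto simp: Sm_def Bg_def)
  have Smf: "finite Sm" "finite Bg" using Af by (auto simp: Sm_def Bg_def)
  define K where "K = 3 * L2^2 + 3 * L2 + 9 * real n * \<theta>"
  have j0: "0 \<le> L2" using j by linarith
  have "\<bar>(\<integral>S. real (B_S p n S j k) \<partial>samples n p) - B_poi p n j k\<bar> = \<bar>\<Sum>a\<in>A. b a - \<pi> a\<bar>"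
    by (simp add: E_BS[OF fin] B_poi_sum[OF fin] A_def b_def \<pi>_def sum_subtractf)
  also have "\<dots> \<le> (\<Sum>a\<in>A. \<bar>b a - \<pi> a\<bar>)" by (rule sum_abs)
  also have "\<dots> = (\<Sum>a\<in>Sm. \<bar>b a - \<pi> a\<bar>) + (\<Sum>a\<in>Bg. \<bar>b a - \<pi> a\<bar>)"
    unfolding SmBg(1) by (rule sum.union_disjoint) (use Smf SmBg in auto)
  also have "(\<Sum>a\<in>Sm. \<bar>b a - \<pi> a\<bar>) \<le> (\<Sum>a\<in>Sm. pmf p a * K)"
  proof (rule sum_mono)
    fix a assume a: "a \<in> Sm"
    define x where "x = pmf p a"
    have x: "0 \<le> x" "x \<le> 1" "x \<le> \<theta>" using a by (auto simp: x_def pmf_le_1 Sm_def)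
    have jx: "real j * x \<le> 1"
    proof -
      have "real j * x \<le> L2 * \<theta>" using j x by (intro mult_mono) auto
      then show ?thesis using L2th by linarith
    qed
    have jn: "j \<le> n" using j L2n by linarith
    have "\<bar>b a - \<pi> a\<bar> \<le> 3 * real j^2 * x + 3 * real j * x + 9 * real n * x^2"
      unfolding b_def \<pi>_def x_def[symmetric] by (rule binom_poi[OF n jn x(1,2) jx])
    also have "\<dots> \<le> x * K"
    proof -
      have "real j^2 \<le> L2^2" using j by (intro power_mono) auto
      then have 1: "3 * real j^2 * x \<le> x * (3 * L2^2)" using x by (simp add: mult_left_mono mult.commute)
      have 2: "3 * real j * x \<le> x * (3 * L2)" using j x by (simp add: mult_left_mono mult.commute)
      have "x^2 \<le> x * \<theta>" using x by (simp add: power2_eq_square mult_left_mono)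
      then have 3: "9 * real n * x^2 \<le> x * (9 * real n * \<theta>)"
        by (metis mult.left_commute mult_left_mono of_nat_0_le_iff mult_nonneg_nonneg zero_le_numeral)
      show ?thesis using 1 2 3 unfolding K_def by (simp add: algebra_simps)
    qed
    finally show "\<bar>b a - \<pi> a\<bar> \<le> pmf p a * K" by (simp add: x_def)
  qed
  also have "(\<Sum>a\<in>Sm. pmf p a * K) = (\<Sum>a\<in>Sm. pmf p a) * K" by (simp add: sum_distrib_right)
  also have "\<dots> \<le> 1 * K"
  proof (rule mult_right_mono)
    show "(\<Sum>a\<in>Sm. pmf p a) \<le> 1" by (rule sum_pmf_le1[OF Smf(1)])
    show "0 \<le> K" using j0 th unfolding K_def by simp
  qed
  also have "(\<Sum>a\<in>Bg. \<bar>b a - \<pi> a\<bar>) \<le> (\<Sum>a\<in>Bg. 1)"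
  proof (rule sum_mono)
    fix a assume a: "a \<in> Bg"
    have e: "b a = pmf (binomial_pmf n (pmf p a)) j" by (simp add: b_def pmf_le_1)
    have "0 \<le> b a" unfolding e by (rule pmf_nonneg)
    moreover have "b a \<le> 1" unfolding e by (rule pmf_le_1)
    moreover have "0 \<le> \<pi> a" by (simp add: \<pi>_def poi_nonneg)
    moreover have "\<pi> a \<le> 1" by (simp add: \<pi>_def poi_le_1)
    ultimately show "\<bar>b a - \<pi> a\<bar> \<le> 1" by linarith
  qed
  also have "(\<Sum>a\<in>Bg. 1) = real (card Bg)" by simp
  also have "\<dots> \<le> 1 / \<theta>"
    by (rule card_big[OF Smf(2) th, where p=p]) (auto simp: Bg_def)
  finally show ?thesis unfolding K_def by simp
qed


lemma lt_nat_ceil: "real j < r \<Longrightarrow> j < nat \<lceil>r\<rceil>"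
  by linarith

lemma nat_ceil_le: "0 \<le> r \<Longrightarrow> real (nat \<lceil>r\<rceil>) \<le> r + 1"
  by linarith

definition delta0 :: "nat \<Rightarrow> real" where
  "delta0 n = 6 * real n / (exp (ln (real n) powr 1.5) - 1)
     + 2 * real n * (2 * exp (- (ln (real n) powr 1.5) / 4))
     + ((ln (real n))^2 + 1) * (real n * (ln (real n))^2 + 1) * (2 * exp (-2 * (real n powr 0.6 / 2)^2 / (real n * 2^2)))"

definition good :: "nat \<Rightarrow> bool" where
  "good n \<longleftrightarrow> 4 \<le> n \<and> (ln (real n))^2 * real n powr (-0.45) \<le> 1 \<and> (ln (real n))^2 \<le> real n
     \<and> 3 * ((ln (real n))^2)^2 + 3 * (ln (real n))^2 + 9 * real n * real n powr (-0.45) + 1 / real n powr (-0.45) \<le> real n powr 0.6 / 2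
     \<and> ln (real n) powr 1.5 > 1/2"

lemma main_bound:
  fixes p :: "'a pmf"
  assumes fin: "finite (set_pmf p)" and g: "good n"
  shows "measure_pmf.prob (samples n p) {S. faithful p n S} \<ge> 1 - delta0 n"
proof -
  define L where "L = ln (real n) powr 1.5"
  define L2 where "L2 = (ln (real n))^2"
  define D where "D = real n * (ln (real n))^2"
  define \<theta> where "\<theta> = real n powr (-0.45)"
  define t where "t = real n powr 0.6 / 2"
  define Msz where "Msz a = max L (sqrt (real n * pmf p a * L))" for a
  define Sm where "Sm = {a \<in> set_pmf p. real n * pmf p a \<le> 1/2}"
  define Bg where "Bg = {a \<in> set_pmf p. \<not> real n * pmf p a \<le> 1/2}"
  define J where "J = {..<nat \<lceil>L2\<rceil>}"
  define Kk where "Kk = {..<nat \<lceil>D\<rceil>}"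
  define f where "f jk S = real (B_S p n S (fst jk) (snd jk))" for jk S
  define Ef where "Ef jk = (\<integral>S. f jk S \<partial>samples n p)" for jk
  define Ev1 where "Ev1 = (\<Union>a\<in>Sm. {S. L \<le> real (count_list S a)})"
  define Ev2 where "Ev2 = (\<Union>a\<in>Bg. {S. Msz a \<le> \<bar>real n * pmf p a - real (count_list S a)\<bar>})"
  define Ev3 where "Ev3 = (\<Union>jk\<in>J \<times> Kk. {S. t \<le> \<bar>f jk S - Ef jk\<bar>})"
  have n3: "n \<ge> 4" using g by (simp add: good_def)
  have npos: "real n > 0" using n3 by simp
  have ln1: "ln (real n) > 1"
  proof -
    have "real n \<ge> 4" using n3 by simp
    then have "exp 1 < real n" using exp_le by linarith
    then have "ln (exp 1) < ln (real n)" using npos by (subst ln_less_cancel_iff) auto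
    then show ?thesis by simp
  qed
  have L2pos: "L2 > 0" using ln1 by (simp add: L2_def)
  have Dpos: "D > 0" unfolding D_def using ln1 npos by (intro mult_pos_pos) auto
  have Lhalf: "L > 1/2" using g by (simp add: good_def L_def)
  have thpos: "\<theta> > 0" using npos by (simp add: \<theta>_def)
  have L2th: "L2 * \<theta> \<le> 1" using g by (simp add: good_def L2_def \<theta>_def)
  have L2n: "L2 \<le> real n" using g by (simp add: good_def L2_def)
  have G4: "3 * L2^2 + 3 * L2 + 9 * real n * \<theta> + 1 / \<theta> \<le> t"
    using g by (simp add: good_def L2_def \<theta>_def t_def)
  have tpos: "t > 0" using npos by (simp add: t_def)
  have Smf: "finite Sm" "finite Bg" using fin by (auto simp: Sm_def Bg_def)

  have sub: "UNIV - {S. faithful p n S} \<subseteq> Ev1 \<union> Ev2 \<union> Ev3"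
  proof
    fix S assume "S \<in> UNIV - {S. faithful p n S}"
    then have nf: "\<not> faithful p n S" by simp
    show "S \<in> Ev1 \<union> Ev2 \<union> Ev3"
    proof (cases "\<forall>a. 0 < pmf p a \<longrightarrow> \<bar>real n * pmf p a - real (count_list S a)\<bar> < Msz a")
      case False
      then obtain a where a: "0 < pmf p a" "Msz a \<le> \<bar>real n * pmf p a - real (count_list S a)\<bar>"
        by (auto simp: not_less)
      have aset: "a \<in> set_pmf p" using a by (simp add: set_pmf_iff)
      have hML: "L \<le> Msz a" by (simp add: Msz_def)
      show ?thesis
      proof (cases "real n * pmf p a \<le> 1/2")
        case True
        have "L \<le> real (count_list S a)"
        proof (cases "real (count_list S a) \<le> real n * pmf p a")
          case True
          have "\<bar>real n * pmf p a - real (count_list S a)\<bar> \<le> real n * pmf p a" using True by simp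
          then show ?thesis using a(2) hML Lhalf \<open>real n * pmf p a \<le> 1/2\<close> by linarith
        next
          case False
          then have "\<bar>real n * pmf p a - real (count_list S a)\<bar> = real (count_list S a) - real n * pmf p a" by simp
          moreover have "0 \<le> real n * pmf p a" by simp
          ultimately show ?thesis using a(2) hML by linarith
        qed
        then have "S \<in> Ev1" using aset True by (auto simp: Ev1_def Sm_def)
        then show ?thesis by blast
      next
        case False
        then have "S \<in> Ev2" using aset a by (auto simp: Ev2_def Bg_def)
        then show ?thesis by blast
      qed
    next
      case True
      with nf obtain j k where jk: "real j < L2" "\<not> \<bar>B_poi p n j k - real (B_S p n S j k)\<bar> < real n powr 0.6"
        unfolding faithful_def Msz_def L_def L2_def by blast
      have kD: "real k < D"
      proof (rule ccontr)
        assume "\<not> real k < D"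
        then have kD': "D \<le> real k" by simp
        have e: "bucketset p n k = {}"
        proof (rule ccontr)
          assume "bucketset p n k \<noteq> {}"
          then obtain a where "a \<in> bucketset p n k" by blast
          then have "real k / D < pmf p a" by (simp add: bucketset_def in_bucket_def D_def)
          also have "\<dots> \<le> 1" by (rule pmf_le_1)
          finally have "real k < D" using Dpos by (simp add: field_simps)
          then show False using kD' by simp
        qed
        have "B_poi p n j k = 0" by (simp add: B_poi_sum[OF fin] e)
        moreover have "real (B_S p n S j k) = 0" by (simp add: BS_sum[OF fin] e)
        ultimately show False using jk(2) npos by simp
      qed
      have jkin: "(j, k) \<in> J \<times> Kk"
        using lt_nat_ceil[OF jk(1)] lt_nat_ceil[OF kD] by (simp add: J_def Kk_def)
      have close: "\<bar>Ef (j, k) - B_poi p n j k\<bar> \<le> t"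
      proof -
        have "\<bar>Ef (j, k) - B_poi p n j k\<bar> \<le> 3 * L2^2 + 3 * L2 + 9 * real n * \<theta> + 1 / \<theta>"
          unfolding Ef_def f_def fst_conv snd_conv
          by (rule E_close[OF fin _ jk(1) thpos L2th L2n]) (use n3 in simp)
        then show ?thesis using G4 by linarith
      qed
      have "t \<le> \<bar>f (j, k) S - Ef (j, k)\<bar>"
        using jk(2) close unfolding f_def fst_conv snd_conv t_def by linarith
      then have "S \<in> Ev3" using jkin by (auto simp: Ev3_def)
      then show ?thesis by blast
    qed
  qed

  let ?P = "measure_pmf.prob (samples n p)"
  have P1: "?P Ev1 \<le> 6 * real n / (exp L - 1)"
  proof -
    have "?P Ev1 \<le> (\<Sum>a\<in>Sm. ?P {S. L \<le> real (count_list S a)})"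
      unfolding Ev1_def by (rule measure_pmf.finite_measure_subadditive_finite) (use Smf in auto)
    also have "\<dots> \<le> (\<Sum>a\<in>Sm. 6 * (real n * pmf p a) / (exp L - 1))"
      by (rule sum_mono, rule small_tail[OF fin]) (use Lhalf in \<open>auto simp: Sm_def\<close>)
    also have "\<dots> = 6 * real n / (exp L - 1) * (\<Sum>a\<in>Sm. pmf p a)"
      by (simp add: sum_distrib_left sum_divide_distrib mult.assoc)
    also have "\<dots> \<le> 6 * real n / (exp L - 1) * 1"
      using Lhalf by (intro mult_left_mono sum_pmf_le1 Smf) auto
    finally show ?thesis by simp
  qed
  have P2: "?P Ev2 \<le> 2 * real n * (2 * exp (- L / 4))"
  proof -
    have "?P Ev2 \<le> (\<Sum>a\<in>Bg. ?P {S. Msz a \<le> \<bar>real n * pmf p a - real (count_list S a)\<bar>})"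
      unfolding Ev2_def by (rule measure_pmf.finite_measure_subadditive_finite) (use Smf in auto)
    also have "\<dots> \<le> (\<Sum>a\<in>Bg. 2 * exp (- L / 4))"
    proof (rule sum_mono)
      fix a assume a: "a \<in> Bg"
      have mu: "real n * pmf p a > 0" using a by (auto simp: Bg_def)
      show "?P {S. Msz a \<le> \<bar>real n * pmf p a - real (count_list S a)\<bar>} \<le> 2 * exp (- L / 4)"
      proof (rule chernoff_count[OF fin refl mu])
        show "Msz a > 0" using Lhalf by (simp add: Msz_def)
        show "L \<le> Msz a" by (simp add: Msz_def)
        have "real n * pmf p a * L \<ge> 0" using mu Lhalf by simp
        then have "(sqrt (real n * pmf p a * L))^2 = real n * pmf p a * L" by simp
        moreover have "sqrt (real n * pmf p a * L) \<le> Msz a" by (simp add: Msz_def)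
        ultimately show "real n * pmf p a * L \<le> (Msz a)^2"
          by (metis power_mono real_sqrt_ge_zero \<open>real n * pmf p a * L \<ge> 0\<close>)
      qed
    qed
    also have "\<dots> = real (card Bg) * (2 * exp (- L / 4))" by simp
    also have "\<dots> \<le> (2 * real n) * (2 * exp (- L / 4))"
    proof (rule mult_right_mono)
      have "real (card Bg) \<le> 1 / (1 / (2 * real n))"
        by (rule card_big[OF Smf(2), where p=p]) (use npos in \<open>auto simp: Bg_def field_simps\<close>)
      then show "real (card Bg) \<le> 2 * real n" by simp
    qed simp
    finally show ?thesis by simp
  qed
  have P3: "?P Ev3 \<le> (L2 + 1) * (D + 1) * (2 * exp (-2 * t^2 / (real n * 2^2)))"
  proof -
    have fJK: "finite (J \<times> Kk)" by (simp add: J_def Kk_def)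
    have "?P Ev3 \<le> (\<Sum>jk\<in>J \<times> Kk. ?P {S. t \<le> \<bar>f jk S - Ef jk\<bar>})"
      unfolding Ev3_def by (rule measure_pmf.finite_measure_subadditive_finite) (use fJK in auto)
    also have "\<dots> \<le> (\<Sum>jk\<in>J \<times> Kk. 2 * exp (-2 * t^2 / (real n * 2^2)))"
    proof (rule sum_mono)
      fix jk :: "nat \<times> nat"
      show "?P {S. t \<le> \<bar>f jk S - Ef jk\<bar>} \<le> 2 * exp (-2 * t^2 / (real n * 2^2))"
        unfolding Ef_def f_def
        by (rule mcd_abs[OF fin bdiff_BS[OF fin] _ _ tpos]) (use n3 in auto)
    qed
    also have "\<dots> = real (card J) * real (card Kk) * (2 * exp (-2 * t^2 / (real n * 2^2)))"
      by (simp add: card_cartesian_product)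
    also have "\<dots> \<le> (L2 + 1) * (D + 1) * (2 * exp (-2 * t^2 / (real n * 2^2)))"
    proof (rule mult_right_mono)
      have "real (card J) \<le> L2 + 1" unfolding J_def using nat_ceil_le[of L2] L2pos by simp
      moreover have "real (card Kk) \<le> D + 1" unfolding Kk_def using nat_ceil_le[of D] Dpos by simp
      ultimately show "real (card J) * real (card Kk) \<le> (L2 + 1) * (D + 1)"
        by (intro mult_mono) auto
    qed simp
    finally show ?thesis .
  qed
  have "?P (UNIV - {S. faithful p n S}) \<le> ?P (Ev1 \<union> Ev2 \<union> Ev3)"
    by (rule measure_pmf.finite_measure_mono[OF sub]) simp
  also have "\<dots> \<le> ?P Ev1 + ?P Ev2 + ?P Ev3"
  proof -
    have "?P (Ev1 \<union> Ev2 \<union> Ev3) \<le> ?P (Ev1 \<union> Ev2) + ?P Ev3" by (rule measure_Un_le) auto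
    moreover have "?P (Ev1 \<union> Ev2) \<le> ?P Ev1 + ?P Ev2" by (rule measure_Un_le) auto
    ultimately show ?thesis by linarith
  qed
  also have "\<dots> \<le> delta0 n"
    using P1 P2 P3 unfolding delta0_def L_def L2_def D_def t_def by linarith
  finally have "?P (UNIV - {S. faithful p n S}) \<le> delta0 n" .
  moreover have "?P (UNIV - {S. faithful p n S}) = 1 - ?P {S. faithful p n S}"
    using measure_pmf.prob_compl[of "{S. faithful p n S}" "samples n p"] by simp
  ultimately show ?thesis by simp
qed


theorem lemma2:
  "\<exists>\<delta> :: nat \<Rightarrow> real.
     (\<forall>c::real. c > 0 \<longrightarrow> ((\<lambda>n. real n powr c * \<delta> n) \<longlonglongrightarrow> 0)) \<and>
     (\<forall>(p :: nat pmf) (n :: nat). finite (set_pmf p) \<longrightarrow>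
        measure_pmf.prob (samples n p) {S. faithful p n S} \<ge> 1 - \<delta> n)"
proof -
  have e1: "eventually (\<lambda>n::nat. (ln (real n))^2 * real n powr (-0.45) \<le> 1) sequentially" by real_asymp
  have e2: "eventually (\<lambda>n::nat. (ln (real n))^2 \<le> real n) sequentially" by real_asymp
  have e3: "eventually (\<lambda>n::nat. 3 * ((ln (real n))^2)^2 + 3 * (ln (real n))^2 + 9 * real n * real n powr (-0.45) + 1 / real n powr (-0.45) \<le> real n powr 0.6 / 2) sequentially" by real_asymp
  have e4: "eventually (\<lambda>n::nat. ln (real n) powr 1.5 > 1/2) sequentially" by real_asymp
  have e0: "eventually (\<lambda>n::nat. 4 \<le> n) sequentially" by (rule eventually_ge_at_top)
  have "eventually good sequentially"
    using eventually_conj[OF e0 eventually_conj[OF e1 eventually_conj[OF e2 eventually_conj[OF e3 e4]]]]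
    by (rule eventually_mono) (simp only: good_def)
  then obtain N where N: "\<And>n. n \<ge> N \<Longrightarrow> good n" by (auto simp: eventually_sequentially)
  define \<delta> where "\<delta> n = (if n \<ge> N then delta0 n else 1)" for n
  show ?thesis
  proof (intro exI[of _ \<delta>] conjI allI impI)
    fix c :: real assume c: "c > 0"
    have lim: "((\<lambda>n::nat. real n powr c * delta0 n) \<longlongrightarrow> 0) sequentially"
      unfolding delta0_def using c by real_asymp
    have "eventually (\<lambda>n. real n powr c * delta0 n = real n powr c * \<delta> n) sequentially"
      using eventually_ge_at_top[of N] by eventually_elim (simp add: \<delta>_def)
    then show "(\<lambda>n. real n powr c * \<delta> n) \<longlonglongrightarrow> 0"
      by (rule Lim_transform_eventually[OF lim])
  next
    fix p :: "nat pmf" and n :: nat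
    assume fin: "finite (set_pmf p)"
    show "measure_pmf.prob (samples n p) {S. faithful p n S} \<ge> 1 - \<delta> n"
    proof (cases "n \<ge> N")
      case True
      then show ?thesis using main_bound[OF fin N[OF True]] by (simp add: \<delta>_def)
    next
      case False
      then show ?thesis by (simp add: \<delta>_def)
    qed
  qed
qed

end
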